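(* For the model $\dot S=\Lambda-F_1(S,I_1)-F_2(S,I_2)-\lambda S$, $\dot V_1=rS-(\mu+kI_2)V_1$, $\dot I_1=F_1(S,I_1)-\alpha_1I_1$, $\dot I_2=F_2(S,I_2)+kI_2V_1-\alpha_2I_2$, the closed set $\Omega_1=\{(S,V_1,I_1,I_2)\in\Omega : S\le S^0,\ V_1\le V_1^0\}$ is positively invariant.
   Context: The state is $(S,V_1,I_1,I_2)\in\mathbb{R}^4_+$. The constants $\Lambda,\mu,r,k,\gamma_1,\gamma_2>0$ and $v_1,v_2\ge0$; $\lambda=r+\mu$ and $\alpha_i=\gamma_i+v_i+\mu$. For $i=1,2$ the incidence functions satisfy: (H1) $F_i(S,I_i)=I_if_i(S,I_i)$ with $F_i,f_i\in C^2(\mathbb{R}^2_+,\mathbb{R}_+)$ and $F_i(0,I_i)=F_i(S,0)=0$; (H2) $\partial f_i/\partial S>0$ and $\partial f_i/\partial I_i\le0$ on $\mathbb{R}^2_+$; (H3) $\lim_{I_i\to0^+}F_i(S,I_i)/I_i$ exists and is positive for $S>0$. Here $\Omega=\{(S,V_1,I_1,I_2)\in\mathbb{R}^4_+: S+V_1+I_1+I_2\le\Lambda/\mu\}$, $S^0=\Lambda/\lambda$ and $V_1^0=r\Lambda/(\mu\lambda)$. *)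

theory Defs
  imports "HOL-Analysis.Analysis"
begin

definition quad2 :: "(real \<times> real) set" where
  "quad2 = {p. 0 \<le> fst p \<and> 0 \<le> snd p}"

text \<open>g is of class C^2 on the set A: twice Frechet differentiable with
  continuous second derivative on some open set containing A
  (the usual meaning of C^2 on a closed set such as the quadrant).\<close>
definition C2_on :: "(real \<times> real) set \<Rightarrow> (real \<times> real \<Rightarrow> real) \<Rightarrow> bool" where
  "C2_on A g \<longleftrightarrow> (\<exists>U g' g''. open U \<and> A \<subseteq> U \<and>
      (\<forall>x\<in>U. (g has_derivative blinfun_apply (g' x)) (at x)) \<and>
      (\<forall>x\<in>U. (g' has_derivative blinfun_apply (g'' x)) (at x)) \<and>
      continuous_on U g'')"

definition incidence_hyp :: "(real \<Rightarrow> real \<Rightarrow> real) \<Rightarrow> (real \<Rightarrow> real \<Rightarrow> real) \<Rightarrow> bool" where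
  "incidence_hyp F f \<longleftrightarrow>
     \<comment> \<open>(H1)\<close>
     (\<forall>S I. 0 \<le> S \<longrightarrow> 0 \<le> I \<longrightarrow> F S I = I * f S I) \<and>
     C2_on quad2 (\<lambda>p. F (fst p) (snd p)) \<and> C2_on quad2 (\<lambda>p. f (fst p) (snd p)) \<and>
     (\<forall>S I. 0 \<le> S \<longrightarrow> 0 \<le> I \<longrightarrow> 0 \<le> F S I \<and> 0 \<le> f S I) \<and>
     (\<forall>I. 0 \<le> I \<longrightarrow> F 0 I = 0) \<and> (\<forall>S. 0 \<le> S \<longrightarrow> F S 0 = 0) \<and>
     \<comment> \<open>(H2)\<close>
     (\<forall>S I. 0 \<le> S \<longrightarrow> 0 \<le> I \<longrightarrow> deriv (\<lambda>s. f s I) S > 0) \<and>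
     (\<forall>S I. 0 \<le> S \<longrightarrow> 0 \<le> I \<longrightarrow> deriv (\<lambda>i. f S i) I \<le> 0) \<and>
     \<comment> \<open>(H3)\<close>
     (\<forall>S. 0 < S \<longrightarrow> (\<exists>L>0. ((\<lambda>I. F S I / I) \<longlongrightarrow> L) (at_right 0)))"

definition Omega :: "real \<Rightarrow> real \<Rightarrow> (real \<times> real \<times> real \<times> real) set" where
  "Omega \<Lambda> \<mu> = {(S, V1, I1, I2). 0 \<le> S \<and> 0 \<le> V1 \<and> 0 \<le> I1 \<and> 0 \<le> I2 \<and>
                                  S + V1 + I1 + I2 \<le> \<Lambda> / \<mu>}"

definition Omega1 :: "real \<Rightarrow> real \<Rightarrow> real \<Rightarrow> (real \<times> real \<times> real \<times> real) set" where
  "Omega1 \<Lambda> \<mu> r = {(S, V1, I1, I2). (S, V1, I1, I2) \<in> Omega \<Lambda> \<mu> \<and>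
                     S \<le> \<Lambda> / (r + \<mu>) \<and> V1 \<le> r * \<Lambda> / (\<mu> * (r + \<mu>))}"

end

theory Submission imports Defs begin

lemma barrier:
  fixes x x' :: "real \<Rightarrow> real" and a b C :: real
  assumes ab: "a \<le> b" and cont: "continuous_on {a..b} x" and xa: "0 \<le> x a"
    and der: "\<And>t. a < t \<Longrightarrow> t < b \<Longrightarrow> (x has_real_derivative x' t) (at t)"
    and bnd: "\<And>t. a < t \<Longrightarrow> t < b \<Longrightarrow> x t < 0 \<Longrightarrow> C * x t \<le> x' t"
  shows "\<forall>t\<in>{a..b}. 0 \<le> x t"
proof (rule ccontr)
  assume "\<not> ?thesis"
  then obtain t2 where t2: "t2 \<in> {a..b}" "x t2 < 0" by force
  define A where "A = {s \<in> {a..t2}. (\<lambda>_. 0) s \<le> x s}"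
  have cA: "closed A" unfolding A_def
    by (rule continuous_on_closed_Collect_le) (use cont t2 in \<open>auto intro: continuous_on_subset\<close>)
  have aA: "a \<in> A" using xa t2 by (auto simp: A_def)
  have bA: "bdd_above A" unfolding A_def by (rule bdd_aboveI[of _ t2]) auto
  define t1 where "t1 = Sup A"
  have t1A: "t1 \<in> A" unfolding t1_def using closed_contains_Sup[OF _ bA cA] aA by blast
  hence t1: "a \<le> t1" "t1 \<le> t2" "0 \<le> x t1" by (auto simp: A_def)
  have t12: "t1 < t2" using t1 t2 by (cases "t1 = t2") auto
  have neg: "x s < 0" if "t1 < s" "s \<le> t2" for s
  proof (rule ccontr)
    assume "\<not> x s < 0"
    hence "s \<in> A" using that t1 by (auto simp: A_def)
    hence "s \<le> t1" unfolding t1_def using bA by (rule cSup_upper)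
    thus False using that by simp
  qed
  define g where "g s = x s * exp (- C * s)" for s
  have "g t1 \<le> g t2"
  proof (rule DERIV_nonneg_imp_increasing_open[OF less_imp_le[OF t12]])
    fix s assume s: "t1 < s" "s < t2"
    have d: "(g has_real_derivative (x' s * exp (- C * s) + x s * (exp (- C * s) * (- C * 1)))) (at s)"
      unfolding g_def using der[of s] s t1 t2
      by (intro derivative_eq_intros) auto
    have "x' s - C * x s \<ge> 0" using bnd[of s] neg[of s] s t1 t2 by auto
    hence "0 \<le> (x' s - C * x s) * exp (- C * s)" by simp
    moreover have "(x' s - C * x s) * exp (- C * s) = x' s * exp (- C * s) + x s * (exp (- C * s) * (- C * 1))"
      by (simp add: algebra_simps)
    ultimately show "\<exists>y. (g has_real_derivative y) (at s) \<and> 0 \<le> y" using d by metis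
  next
    show "continuous_on {t1..t2} g" unfolding g_def
      by (intro continuous_intros continuous_on_subset[OF cont]) (use t1 t2 in auto)
  qed
  moreover have "0 \<le> g t1" using t1 by (simp add: g_def)
  moreover have "g t2 < 0" using t2 by (simp add: g_def mult_neg_pos)
  ultimately show False by simp
qed

lemma cont_induct:
  fixes a b :: real and P :: "real \<Rightarrow> bool"
  assumes ab: "a \<le> b"
    and clo: "\<And>t. a \<le> t \<Longrightarrow> t \<le> b \<Longrightarrow> (\<forall>s. a \<le> s \<longrightarrow> s < t \<longrightarrow> P s) \<Longrightarrow> P t"
    and ext: "\<And>t. a \<le> t \<Longrightarrow> t < b \<Longrightarrow> (\<forall>s. a \<le> s \<longrightarrow> s \<le> t \<longrightarrow> P s) \<Longrightarrow>
               (\<exists>d>0. \<forall>s. t \<le> s \<longrightarrow> s \<le> t + d \<longrightarrow> s \<le> b \<longrightarrow> P s)"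
  shows "\<forall>t\<in>{a..b}. P t"
proof -
  define A where "A = {t \<in> {a..b}. \<forall>s. a \<le> s \<longrightarrow> s \<le> t \<longrightarrow> P s}"
  have Pa: "P a" using clo[of a] ab by auto
  have aA: "a \<in> A" using Pa ab by (auto simp: A_def)
  have bA: "bdd_above A" unfolding A_def by (rule bdd_aboveI[of _ b]) auto
  define t0 where "t0 = Sup A"
  have t0a: "a \<le> t0" unfolding t0_def using aA bA by (rule cSup_upper)
  have t0b: "t0 \<le> b" unfolding t0_def using aA by (intro cSup_least) (auto simp: A_def)
  have below: "P s" if sa: "a \<le> s" and st: "s < t0" for s
  proof -
    obtain u where "u \<in> A" "s < u" using st less_cSup_iff[of A s] aA bA unfolding t0_def by blast
    thus ?thesis using sa by (auto simp: A_def)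
  qed
  have Pt0: "P t0" using clo[of t0] t0a t0b below by auto
  have t0A: "t0 \<in> A" using below Pt0 t0a t0b by (auto simp: A_def le_less)
  have "t0 = b"
  proof (rule ccontr)
    assume "t0 \<noteq> b"
    hence lt: "t0 < b" using t0b by simp
    obtain d where d: "d > 0" "\<forall>s. t0 \<le> s \<longrightarrow> s \<le> t0 + d \<longrightarrow> s \<le> b \<longrightarrow> P s"
      using ext[OF t0a lt] t0A by (auto simp: A_def)
    define u where "u = min b (t0 + d)"
    have "u \<in> A" unfolding A_def u_def using d t0A t0a lt
      by (auto simp: A_def)
    hence "u \<le> t0" unfolding t0_def using bA by (rule cSup_upper)
    thus False using d lt by (simp add: u_def)
  qed
  thus ?thesis using t0A by (auto simp: A_def)
qed

lemma incid_lip: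
  assumes H: "incidence_hyp F f" and s0: "0 \<le> s0"
  shows "\<exists>\<epsilon>>0. \<exists>M. \<forall>s i. 0 \<le> s \<longrightarrow> \<bar>s - s0\<bar> < \<epsilon> \<longrightarrow> \<bar>i\<bar> < \<epsilon> \<longrightarrow> \<bar>F s i\<bar> \<le> M * \<bar>i\<bar>"
proof -
  define G where "G p = F (fst p) (snd p)" for p :: "real \<times> real"
  have C2: "C2_on quad2 G" using H unfolding incidence_hyp_def G_def by auto
  have F0: "\<And>s. 0 \<le> s \<Longrightarrow> F s 0 = 0" using H unfolding incidence_hyp_def by auto
  obtain U g' g'' where U: "open U" "quad2 \<subseteq> U"
    and dG: "\<forall>x\<in>U. (G has_derivative blinfun_apply (g' x)) (at x)"
    and dg': "\<forall>x\<in>U. (g' has_derivative blinfun_apply (g'' x)) (at x)"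
    using C2 unfolding C2_on_def by blast
  have "(s0, 0) \<in> U" using U s0 by (auto simp: quad2_def)
  then obtain e where e: "e > 0" "ball (s0, 0) e \<subseteq> U" using U(1) open_contains_ball by blast
  define K where "K = cball (s0, (0::real)) (e/2)"
  have "K \<subseteq> ball (s0,0) e" unfolding K_def using e by (simp add: cball_subset_ball_iff)
  hence KU: "K \<subseteq> U" using e by blast
  have "continuous_on K g'"
    using KU dg' by (intro continuous_at_imp_continuous_on) (auto dest: has_derivative_continuous)
  hence "compact (g' ` K)" unfolding K_def by (intro compact_continuous_image) auto
  then obtain M where M: "\<forall>y\<in>g' ` K. norm y \<le> M" using compact_imp_bounded bounded_iff by metis
  have key: "\<bar>F s i\<bar> \<le> M * \<bar>i\<bar>" if s: "0 \<le> s" "\<bar>s - s0\<bar> < e/4" "\<bar>i\<bar> < e/4" for s i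
  proof -
    have inK: "(s, i') \<in> K" if "\<bar>i'\<bar> < e/4" for i'
    proof -
      have "dist (s0, 0) (s, i') \<le> norm (s0 - s) + norm (0 - i')"
        unfolding dist_norm using norm_Pair_le[of "s0 - s" "0 - i'"] by simp
      moreover have "\<bar>s0 - s\<bar> = \<bar>s - s0\<bar>" by simp
      ultimately show ?thesis unfolding K_def using s that by auto
    qed
    have "norm (G (s, i) - G (s, 0)) \<le> M * norm ((s, i) - (s, 0))"
    proof (rule differentiable_bound[of K])
      show "convex K" unfolding K_def by simp
      show "(G has_derivative blinfun_apply (g' x)) (at x within K)" if "x \<in> K" for x
        using dG KU that by (auto intro: has_derivative_at_withinI)
      show "onorm (blinfun_apply (g' x)) \<le> M" if "x \<in> K" for x
        using M that by (simp add: norm_blinfun.rep_eq[symmetric])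
    qed (use inK s e in auto)
    thus "\<bar>F s i\<bar> \<le> M * \<bar>i\<bar>" by (simp add: G_def F0 s)
  qed
  show ?thesis using key e by (intro exI[of _ "e/4"]) auto
qed

lemma cont_near:
  fixes x :: "real \<Rightarrow> real"
  assumes "continuous_on {a..b} x" "t0 \<in> {a..b}" "e > 0"
  shows "\<exists>d>0. \<forall>s\<in>{a..b}. \<bar>s - t0\<bar> < d \<longrightarrow> \<bar>x s - x t0\<bar> < e"
  using assms unfolding continuous_on_iff dist_real_def by blast

lemma local_pos:
  fixes x :: "real \<Rightarrow> real"
  assumes "continuous_on {a..b} x" "t0 \<in> {a..b}" "x t0 > 0"
  shows "\<exists>d>0. \<forall>s. t0 \<le> s \<longrightarrow> s \<le> t0 + d \<longrightarrow> s \<le> b \<longrightarrow> 0 \<le> x s"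
proof -
  obtain d where d: "d > 0" "\<forall>s\<in>{a..b}. \<bar>s - t0\<bar> < d \<longrightarrow> \<bar>x s - x t0\<bar> < x t0"
    using cont_near[OF assms] by blast
  show ?thesis
  proof (intro exI[of _ "d/2"] conjI allI impI)
    fix s assume "t0 \<le> s" "s \<le> t0 + d/2" "s \<le> b"
    hence "\<bar>x s - x t0\<bar> < x t0" using d assms(2) by auto
    thus "0 \<le> x s" by linarith
  qed (use d in auto)
qed

lemma left_closed:
  fixes x :: "real \<Rightarrow> real"
  assumes "continuous_on {a..b} x" "a < t" "t \<le> b" "\<forall>s. a \<le> s \<longrightarrow> s < t \<longrightarrow> 0 \<le> x s"
  shows "0 \<le> x t"
proof (rule ccontr)
  assume "\<not> 0 \<le> x t"
  hence neg: "- x t > 0" by simp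
  obtain d where d: "d > 0" "\<forall>s\<in>{a..b}. \<bar>s - t\<bar> < d \<longrightarrow> \<bar>x s - x t\<bar> < - x t"
    using cont_near[OF assms(1) _ neg, of t] assms by auto
  define s where "s = max a (t - d/2)"
  have "\<bar>x s - x t\<bar> < - x t" using d assms by (auto simp: s_def)
  moreover have "0 \<le> x s" using assms d by (auto simp: s_def)
  ultimately show False by linarith
qed

lemma I_local:
  fixes S I W :: "real \<Rightarrow> real" and F f :: "real \<Rightarrow> real \<Rightarrow> real"
  assumes H: "incidence_hyp F f"
    and cS: "continuous_on {0..T} S" and cI: "continuous_on {0..T} I" and cW: "continuous_on {0..T} W"
    and t0: "0 \<le> t0" "t0 < T" and I0: "0 \<le> I t0" and S0: "0 \<le> S t0"
    and dS: "dS > 0" "\<forall>s. t0 \<le> s \<longrightarrow> s \<le> t0 + dS \<longrightarrow> s \<le> T \<longrightarrow> 0 \<le> S s"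
    and der: "\<And>t. 0 < t \<Longrightarrow> t < T \<Longrightarrow>
          (I has_real_derivative (F (S t) (I t) + c * I t * W t - \<alpha> * I t)) (at t)"
    and c: "c \<ge> 0" and \<alpha>: "\<alpha> \<ge> 0"
  shows "\<exists>d>0. \<forall>s. t0 \<le> s \<longrightarrow> s \<le> t0 + d \<longrightarrow> s \<le> T \<longrightarrow> 0 \<le> I s"
proof (cases "I t0 > 0")
  case True
  thus ?thesis using local_pos[OF cI _ True] t0 by auto
next
  case False
  hence It0: "I t0 = 0" using I0 by simp
  obtain \<epsilon> M where \<epsilon>: "\<epsilon> > 0" and lip: "\<forall>s i. 0 \<le> s \<longrightarrow> \<bar>s - S t0\<bar> < \<epsilon> \<longrightarrow> \<bar>i\<bar> < \<epsilon> \<longrightarrow> \<bar>F s i\<bar> \<le> M * \<bar>i\<bar>"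
    using incid_lip[OF H S0] by blast
  have t0T: "t0 \<in> {0..T}" using t0 by auto
  obtain d1 where d1: "d1 > 0" "\<forall>s\<in>{0..T}. \<bar>s - t0\<bar> < d1 \<longrightarrow> \<bar>S s - S t0\<bar> < \<epsilon>"
    using cont_near[OF cS t0T \<epsilon>] by blast
  obtain d2 where d2: "d2 > 0" "\<forall>s\<in>{0..T}. \<bar>s - t0\<bar> < d2 \<longrightarrow> \<bar>I s - I t0\<bar> < \<epsilon>"
    using cont_near[OF cI t0T \<epsilon>] by blast
  obtain d3 where d3: "d3 > 0" "\<forall>s\<in>{0..T}. \<bar>s - t0\<bar> < d3 \<longrightarrow> \<bar>W s - W t0\<bar> < 1"
    using cont_near[OF cW t0T, of 1] by auto
  define K where "K = \<bar>W t0\<bar> + 1"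
  define d where "d = min dS (min d1 (min d2 d3)) / 2"
  have d: "d > 0" using dS d1 d2 d3 by (simp add: d_def)
  define b where "b = min T (t0 + d)"
  have tb: "t0 \<le> b" using t0 d by (simp add: b_def)
  have "\<forall>t\<in>{t0..b}. 0 \<le> I t"
  proof (rule barrier[of t0 b I "\<lambda>t. F (S t) (I t) + c * I t * W t - \<alpha> * I t" "M + c * K"])
    show "continuous_on {t0..b} I" using t0 by (intro continuous_on_subset[OF cI]) (auto simp: b_def)
    show "0 \<le> I t0" by fact
    fix t assume t: "t0 < t" "t < b"
    hence tT: "0 < t" "t < T" "t \<in> {0..T}" "\<bar>t - t0\<bar> < d" using t0 by (auto simp: b_def)
    show "(I has_real_derivative (F (S t) (I t) + c * I t * W t - \<alpha> * I t)) (at t)"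
      using der tT by auto
    assume It: "I t < 0"
    have "0 \<le> S t" using dS t tT by (auto simp: b_def d_def)
    moreover have "\<bar>S t - S t0\<bar> < \<epsilon>" using d1 tT by (auto simp: d_def)
    moreover have "\<bar>I t\<bar> < \<epsilon>" using d2 tT It0 by (auto simp: d_def)
    ultimately have "\<bar>F (S t) (I t)\<bar> \<le> M * \<bar>I t\<bar>" using lip by blast
    hence h1: "M * I t \<le> F (S t) (I t)" using It by auto
    have "\<bar>W t - W t0\<bar> < 1" using d3 tT by (auto simp: d_def)
    hence "W t \<le> K" by (auto simp: K_def)
    hence "I t * (W t - K) \<ge> 0" using It by (simp add: mult_nonpos_nonpos)
    hence h2: "c * K * I t \<le> c * I t * W t" using c
      by (metis diff_ge_0_iff_ge mult.assoc mult.commute mult_left_mono right_diff_distrib)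
    have h3: "0 \<le> - \<alpha> * I t" using \<alpha> It by (simp add: mult_nonneg_nonpos)
    show "(M + c * K) * I t \<le> F (S t) (I t) + c * I t * W t - \<alpha> * I t"
      using h1 h2 h3 by (simp add: algebra_simps)
  qed (rule tb)
  thus ?thesis using d by (intro exI[of _ d]) (auto simp: b_def)
qed

lemma within_to_at:
  "(f has_real_derivative D) (at t within {0..T}) \<Longrightarrow> 0 < t \<Longrightarrow> t < T \<Longrightarrow> (f has_real_derivative D) (at t)"
  by (simp add: at_within_Icc_at)

theorem mainTheorem3:
  fixes \<Lambda> \<mu> r k \<gamma>1 \<gamma>2 v1 v2 T :: real
    and F1 F2 f1 f2 :: "real \<Rightarrow> real \<Rightarrow> real"
    and S V1 I1 I2 :: "real \<Rightarrow> real"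
  assumes "\<Lambda> > 0" "\<mu> > 0" "r > 0" "k > 0" "\<gamma>1 > 0" "\<gamma>2 > 0" "v1 \<ge> 0" "v2 \<ge> 0"
    and "incidence_hyp F1 f1" and "incidence_hyp F2 f2"
    and "T \<ge> 0"
    and "\<And>t. t \<in> {0..T} \<Longrightarrow> (S has_real_derivative
           (\<Lambda> - F1 (S t) (I1 t) - F2 (S t) (I2 t) - (r + \<mu>) * S t)) (at t within {0..T})"
    and "\<And>t. t \<in> {0..T} \<Longrightarrow> (V1 has_real_derivative
           (r * S t - (\<mu> + k * I2 t) * V1 t)) (at t within {0..T})"
    and "\<And>t. t \<in> {0..T} \<Longrightarrow> (I1 has_real_derivative
           (F1 (S t) (I1 t) - (\<gamma>1 + v1 + \<mu>) * I1 t)) (at t within {0..T})"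
    and "\<And>t. t \<in> {0..T} \<Longrightarrow> (I2 has_real_derivative
           (F2 (S t) (I2 t) + k * I2 t * V1 t - (\<gamma>2 + v2 + \<mu>) * I2 t)) (at t within {0..T})"
    and "(S 0, V1 0, I1 0, I2 0) \<in> Omega1 \<Lambda> \<mu> r"
  shows "\<forall>t\<in>{0..T}. (S t, V1 t, I1 t, I2 t) \<in> Omega1 \<Lambda> \<mu> r"
proof -
  note A = assms
  have F1nn: "\<And>s i. 0 \<le> s \<Longrightarrow> 0 \<le> i \<Longrightarrow> 0 \<le> F1 s i"
   and F10: "\<And>i. 0 \<le> i \<Longrightarrow> F1 0 i = 0"
    using A(9) unfolding incidence_hyp_def by auto
  have F2nn: "\<And>s i. 0 \<le> s \<Longrightarrow> 0 \<le> i \<Longrightarrow> 0 \<le> F2 s i"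
   and F20: "\<And>i. 0 \<le> i \<Longrightarrow> F2 0 i = 0"
    using A(10) unfolding incidence_hyp_def by auto
  have cS: "continuous_on {0..T} S" using A(12) by (rule DERIV_continuous_on)
  have cV: "continuous_on {0..T} V1" using A(13) by (rule DERIV_continuous_on)
  have cI1: "continuous_on {0..T} I1" using A(14) by (rule DERIV_continuous_on)
  have cI2: "continuous_on {0..T} I2" using A(15) by (rule DERIV_continuous_on)
  have atI: "at t within {0..T} = at t" if "0 < t" "t < T" for t
    using that by (rule at_within_Icc_at)
  have dS: "\<And>t. 0 < t \<Longrightarrow> t < T \<Longrightarrow> (S has_real_derivative
           (\<Lambda> - F1 (S t) (I1 t) - F2 (S t) (I2 t) - (r + \<mu>) * S t)) (at t)"
    using within_to_at[OF A(12)] by auto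
  have dV: "\<And>t. 0 < t \<Longrightarrow> t < T \<Longrightarrow> (V1 has_real_derivative
           (r * S t - (\<mu> + k * I2 t) * V1 t)) (at t)"
    using within_to_at[OF A(13)] by auto
  have dI1: "\<And>t. 0 < t \<Longrightarrow> t < T \<Longrightarrow> (I1 has_real_derivative
           (F1 (S t) (I1 t) + 0 * I1 t * V1 t - (\<gamma>1 + v1 + \<mu>) * I1 t)) (at t)"
    using within_to_at[OF A(14)] by simp
  have dI2: "\<And>t. 0 < t \<Longrightarrow> t < T \<Longrightarrow> (I2 has_real_derivative
           (F2 (S t) (I2 t) + k * I2 t * V1 t - (\<gamma>2 + v2 + \<mu>) * I2 t)) (at t)"
    using within_to_at[OF A(15)] by auto
  have init: "0 \<le> S 0" "0 \<le> V1 0" "0 \<le> I1 0" "0 \<le> I2 0"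
    "S 0 + V1 0 + I1 0 + I2 0 \<le> \<Lambda> / \<mu>" "S 0 \<le> \<Lambda> / (r + \<mu>)"
    "V1 0 \<le> r * \<Lambda> / (\<mu> * (r + \<mu>))"
    using A(16) unfolding Omega1_def Omega_def by auto
  have Q: "\<forall>t\<in>{0..T}. 0 \<le> S t \<and> 0 \<le> I1 t \<and> 0 \<le> I2 t"
  proof (rule cont_induct[OF A(11)])
    fix t assume t: "0 \<le> t" "t \<le> T" and prev: "\<forall>s. 0 \<le> s \<longrightarrow> s < t \<longrightarrow> 0 \<le> S s \<and> 0 \<le> I1 s \<and> 0 \<le> I2 s"
    show "0 \<le> S t \<and> 0 \<le> I1 t \<and> 0 \<le> I2 t"
    proof (cases "t = 0")
      case True thus ?thesis using init by simp
    next
      case False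
      hence "0 < t" using t by simp
      thus ?thesis using left_closed[OF cS _ t(2)] left_closed[OF cI1 _ t(2)] left_closed[OF cI2 _ t(2)] prev
        by auto
    qed
  next
    fix t0 assume t0: "0 \<le> t0" "t0 < T" and prev: "\<forall>s. 0 \<le> s \<longrightarrow> s \<le> t0 \<longrightarrow> 0 \<le> S s \<and> 0 \<le> I1 s \<and> 0 \<le> I2 s"
    have q0: "0 \<le> S t0" "0 \<le> I1 t0" "0 \<le> I2 t0" using prev t0 by auto
    have t0T: "t0 \<in> {0..T}" using t0 by auto
    obtain dS where dSp: "dS > 0" "\<forall>s. t0 \<le> s \<longrightarrow> s \<le> t0 + dS \<longrightarrow> s \<le> T \<longrightarrow> 0 \<le> S s"
    proof (cases "S t0 > 0")
      case True thus ?thesis using local_pos[OF cS t0T True] that by blast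
    next
      case False
      hence S0: "S t0 = 0" using q0 by simp
      have "(S has_real_derivative \<Lambda>) (at t0 within {0..T})"
        using A(12)[OF t0T] by (simp add: S0 F10 F20 q0)
      then obtain d where d: "d > 0" "\<forall>h>0. t0 + h \<in> {0..T} \<longrightarrow> h < d \<longrightarrow> S t0 < S (t0 + h)"
        using has_real_derivative_pos_inc_right A(1) by blast
      show ?thesis
      proof (rule that[of "d/2"])
        show "d/2 > 0" using d by simp
        show "\<forall>s. t0 \<le> s \<longrightarrow> s \<le> t0 + d/2 \<longrightarrow> s \<le> T \<longrightarrow> 0 \<le> S s"
        proof (intro allI impI)
          fix s assume s: "t0 \<le> s" "s \<le> t0 + d/2" "s \<le> T"
          show "0 \<le> S s"
          proof (cases "s = t0")
            case True thus ?thesis using S0 by simp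
          next
            case False
            hence "S t0 < S (t0 + (s - t0))" using d s t0 by (intro d(2)[rule_format]) auto
            thus ?thesis using S0 by simp
          qed
        qed
      qed
    qed
    obtain d1 where d1: "d1 > 0" "\<forall>s. t0 \<le> s \<longrightarrow> s \<le> t0 + d1 \<longrightarrow> s \<le> T \<longrightarrow> 0 \<le> I1 s"
      using I_local[OF A(9) cS cI1 cV t0 q0(2) q0(1) dSp dI1] A by auto
    obtain d2 where d2: "d2 > 0" "\<forall>s. t0 \<le> s \<longrightarrow> s \<le> t0 + d2 \<longrightarrow> s \<le> T \<longrightarrow> 0 \<le> I2 s"
      using I_local[OF A(10) cS cI2 cV t0 q0(3) q0(1) dSp dI2] A by auto
    show "\<exists>d>0. \<forall>s. t0 \<le> s \<longrightarrow> s \<le> t0 + d \<longrightarrow> s \<le> T \<longrightarrow> 0 \<le> S s \<and> 0 \<le> I1 s \<and> 0 \<le> I2 s"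
      using dSp d1 d2 by (intro exI[of _ "min dS (min d1 d2)"]) auto
  qed
  have Vnn: "\<forall>t\<in>{0..T}. 0 \<le> V1 t"
  proof (rule barrier[OF A(11) cV init(2) dV, of 0])
    fix t assume t: "0 < t" "t < T" "V1 t < 0"
    have "0 \<le> S t" "0 \<le> I2 t" using Q t by auto
    moreover have "0 \<le> \<mu> + k * I2 t" using A(2) A(4) \<open>0 \<le> I2 t\<close> by simp
    ultimately have "(\<mu> + k * I2 t) * V1 t \<le> 0" "0 \<le> r * S t"
      using t A(3) by (simp_all add: mult_nonneg_nonpos)
    thus "0 * V1 t \<le> r * S t - (\<mu> + k * I2 t) * V1 t" by simp
  qed
  have Sle: "\<forall>t\<in>{0..T}. 0 \<le> \<Lambda> / (r + \<mu>) - S t"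
  proof (rule barrier[OF A(11), of _ "\<lambda>t. - (\<Lambda> - F1 (S t) (I1 t) - F2 (S t) (I2 t) - (r + \<mu>) * S t)" 0])
    show "continuous_on {0..T} (\<lambda>t. \<Lambda> / (r + \<mu>) - S t)" by (intro continuous_intros cS)
    show "0 \<le> \<Lambda> / (r + \<mu>) - S 0" using init by simp
    fix t assume t: "0 < t" "t < T"
    show "((\<lambda>t. \<Lambda> / (r + \<mu>) - S t) has_real_derivative - (\<Lambda> - F1 (S t) (I1 t) - F2 (S t) (I2 t) - (r + \<mu>) * S t)) (at t)"
      using dS[OF t] by (auto intro!: derivative_eq_intros)
    assume neg: "\<Lambda> / (r + \<mu>) - S t < 0"
    have q: "0 \<le> S t" "0 \<le> I1 t" "0 \<le> I2 t" using Q t by auto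
    have "\<Lambda> < (r + \<mu>) * S t" using neg A(2,3) by (simp add: field_simps)
    thus "0 * (\<Lambda> / (r + \<mu>) - S t) \<le> - (\<Lambda> - F1 (S t) (I1 t) - F2 (S t) (I2 t) - (r + \<mu>) * S t)"
      using F1nn[OF q(1,2)] F2nn[OF q(1,3)] by simp
  qed
  have Vle: "\<forall>t\<in>{0..T}. 0 \<le> r * \<Lambda> / (\<mu> * (r + \<mu>)) - V1 t"
  proof (rule barrier[OF A(11), of _ "\<lambda>t. - (r * S t - (\<mu> + k * I2 t) * V1 t)" 0])
    show "continuous_on {0..T} (\<lambda>t. r * \<Lambda> / (\<mu> * (r + \<mu>)) - V1 t)" by (intro continuous_intros cV)
    show "0 \<le> r * \<Lambda> / (\<mu> * (r + \<mu>)) - V1 0" using init by simp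
    fix t assume t: "0 < t" "t < T"
    show "((\<lambda>t. r * \<Lambda> / (\<mu> * (r + \<mu>)) - V1 t) has_real_derivative - (r * S t - (\<mu> + k * I2 t) * V1 t)) (at t)"
      using dV[OF t] by (auto intro!: derivative_eq_intros)
    assume neg: "r * \<Lambda> / (\<mu> * (r + \<mu>)) - V1 t < 0"
    have q: "0 \<le> S t" "0 \<le> I2 t" "0 \<le> V1 t" "S t \<le> \<Lambda> / (r + \<mu>)" using Q Vnn Sle t by auto
    have h: "r * \<Lambda> / (\<mu> * (r + \<mu>)) < V1 t" using neg by simp
    have "\<mu> * (r * \<Lambda> / (\<mu> * (r + \<mu>))) < \<mu> * V1 t" by (rule mult_strict_left_mono[OF h A(2)])
    moreover have "\<mu> * (r * \<Lambda> / (\<mu> * (r + \<mu>))) = r * \<Lambda> / (r + \<mu>)" using A(2) by simp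
    ultimately have "r * \<Lambda> / (r + \<mu>) < \<mu> * V1 t" by simp
    moreover have "r * S t \<le> r * (\<Lambda> / (r + \<mu>))" using q(4) A(3) by (intro mult_left_mono) auto
    moreover have "r * (\<Lambda> / (r + \<mu>)) = r * \<Lambda> / (r + \<mu>)" by simp
    moreover have "0 \<le> k * I2 t * V1 t" using q A(4) by simp
    ultimately show "0 * (r * \<Lambda> / (\<mu> * (r + \<mu>)) - V1 t) \<le> - (r * S t - (\<mu> + k * I2 t) * V1 t)"
      by (simp add: algebra_simps)
  qed
  have Nle: "\<forall>t\<in>{0..T}. 0 \<le> \<Lambda> / \<mu> - (S t + V1 t + I1 t + I2 t)"
  proof (rule barrier[OF A(11), of _ "\<lambda>t. - ((\<Lambda> - F1 (S t) (I1 t) - F2 (S t) (I2 t) - (r + \<mu>) * S t)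
      + (r * S t - (\<mu> + k * I2 t) * V1 t) + (F1 (S t) (I1 t) - (\<gamma>1 + v1 + \<mu>) * I1 t)
      + (F2 (S t) (I2 t) + k * I2 t * V1 t - (\<gamma>2 + v2 + \<mu>) * I2 t))" 0])
    show "continuous_on {0..T} (\<lambda>t. \<Lambda> / \<mu> - (S t + V1 t + I1 t + I2 t))"
      by (intro continuous_intros cS cV cI1 cI2)
    show "0 \<le> \<Lambda> / \<mu> - (S 0 + V1 0 + I1 0 + I2 0)" using init by simp
    fix t assume t: "0 < t" "t < T"
    have dI1': "(I1 has_real_derivative (F1 (S t) (I1 t) - (\<gamma>1 + v1 + \<mu>) * I1 t)) (at t)"
      using dI1[OF t] by simp
    show "((\<lambda>t. \<Lambda> / \<mu> - (S t + V1 t + I1 t + I2 t)) has_real_derivative - ((\<Lambda> - F1 (S t) (I1 t) - F2 (S t) (I2 t) - (r + \<mu>) * S t)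
      + (r * S t - (\<mu> + k * I2 t) * V1 t) + (F1 (S t) (I1 t) - (\<gamma>1 + v1 + \<mu>) * I1 t)
      + (F2 (S t) (I2 t) + k * I2 t * V1 t - (\<gamma>2 + v2 + \<mu>) * I2 t))) (at t)"
      using dS[OF t] dV[OF t] dI1' dI2[OF t] by (auto intro!: derivative_eq_intros)
    assume neg: "\<Lambda> / \<mu> - (S t + V1 t + I1 t + I2 t) < 0"
    have q: "0 \<le> I1 t" "0 \<le> I2 t" using Q t by auto
    have "\<Lambda> < \<mu> * (S t + V1 t + I1 t + I2 t)" using neg A(2) by (simp add: field_simps)
    moreover have "0 \<le> (\<gamma>1 + v1) * I1 t" "0 \<le> (\<gamma>2 + v2) * I2 t" using q A(5-8) by auto
    ultimately show "0 * (\<Lambda> / \<mu> - (S t + V1 t + I1 t + I2 t)) \<le> - ((\<Lambda> - F1 (S t) (I1 t) - F2 (S t) (I2 t) - (r + \<mu>) * S t)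
      + (r * S t - (\<mu> + k * I2 t) * V1 t) + (F1 (S t) (I1 t) - (\<gamma>1 + v1 + \<mu>) * I1 t)
      + (F2 (S t) (I2 t) + k * I2 t * V1 t - (\<gamma>2 + v2 + \<mu>) * I2 t))"
      by (simp add: algebra_simps)
  qed
  show ?thesis using Q Vnn Sle Vle Nle unfolding Omega1_def Omega_def by auto
qed

end
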